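(* Let $0<\alpha<1$ and suppose the Hilbert matrix operator $\mathcal{H}$ acts as an operator $\mathcal{H}\colon H^\infty_\alpha\to H^\infty_\alpha$. Then $$\|\mathcal{H}\|_{H^\infty_\alpha\to H^\infty_\alpha}\ \ge\ \frac{\pi}{\sin(\pi\alpha)}.$$
   Context: $\mathbb D=\{z\in\mathbb C:|z|<1\}$ and $H(\mathbb D)$ denotes the analytic functions on $\mathbb D$. For $0<\alpha<1$, the Korenblum space is $H^\infty_\alpha=\{f\in H(\mathbb D): \|f\|_{H^\infty_\alpha}=\sup_{z\in\mathbb D}(1-|z|^2)^\alpha|f(z)|<\infty\}$. The Hilbert matrix operator acts on $f(z)=\sum_{k\ge0}a_kz^k$ by $\mathcal{H}(f)(z)=\sum_{n\ge0}\big(\sum_{k\ge0}\frac{a_k}{n+k+1}\big)z^n$; equivalently $\mathcal{H}(f)(z)=\int_0^1 T_t(f)(z)\,dt$, where $T_t(f)(z)=\omega_t(z)f(\phi_t(z))$ with $\omega_t(z)=\frac{1}{(t-1)z+1}$ and $\phi_t(z)=\frac{t}{(t-1)z+1}$, $0<t<1$. *)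

theory Defs
  imports "HOL-Analysis.Analysis"
begin

definition korenblum_norm :: "real \<Rightarrow> (complex \<Rightarrow> complex) \<Rightarrow> real" where
  "korenblum_norm \<alpha> f = (SUP z\<in>ball (0::complex) 1. (1 - (cmod z)\<^sup>2) powr \<alpha> * cmod (f z))"

definition korenblum :: "real \<Rightarrow> (complex \<Rightarrow> complex) \<Rightarrow> bool" where
  "korenblum \<alpha> f \<longleftrightarrow> f holomorphic_on ball 0 1 \<and>
     bdd_above ((\<lambda>z. (1 - (cmod z)\<^sup>2) powr \<alpha> * cmod (f z)) ` ball (0::complex) 1)"

text \<open>Weighted composition operators T_t and the Hilbert matrix operator (integral form).\<close>

definition omega_t :: "real \<Rightarrow> complex \<Rightarrow> complex" where
  "omega_t t z = 1 / ((complex_of_real t - 1) * z + 1)"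

definition phi_t :: "real \<Rightarrow> complex \<Rightarrow> complex" where
  "phi_t t z = complex_of_real t / ((complex_of_real t - 1) * z + 1)"

definition hilbert_op :: "(complex \<Rightarrow> complex) \<Rightarrow> complex \<Rightarrow> complex" where
  "hilbert_op f z = integral {0..1} (\<lambda>t::real. omega_t t z * f (phi_t t z))"

definition hilbert_opnorm :: "real \<Rightarrow> ereal" where
  "hilbert_opnorm \<alpha> = (SUP f\<in>{f. korenblum \<alpha> f \<and> korenblum_norm \<alpha> f \<noteq> 0}.
       ereal (korenblum_norm \<alpha> (hilbert_op f) / korenblum_norm \<alpha> f))"

end

theory Submission
  imports Defs
begin

definition ff :: "real \<Rightarrow> complex \<Rightarrow> complex" where
  "ff a z = (1 - z) powr (- complex_of_real a)"

definition hh :: "real \<Rightarrow> real \<Rightarrow> real \<Rightarrow> real" where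
  "hh a x t = (1 - t) powr (- a) * (t + (1 - t) * (1 - x)) powr (a - 1)"

lemma real_ident:
  fixes a x t :: real
  assumes "0 \<le> x" "x < 1" "0 < t" "t < 1"
  shows "1 / (t + (1 - t) * (1 - x)) * ((1 - t) * (1 - x) / (t + (1 - t) * (1 - x))) powr (-a)
     = (1 - x) powr (-a) * hh a x t"
proof -
  define D where "D = t + (1 - t) * (1 - x)"
  have D: "D > 0" unfolding D_def using assms by (smt (verit) mult_pos_pos)
  have "1 / D * ((1 - t) * (1 - x) / D) powr (-a) = 1 / D * ((1 - t) powr (-a) * (1 - x) powr (-a) / D powr (-a))"
    using assms D by (simp add: powr_divide powr_mult)
  also have "\<dots> = (1 - x) powr (-a) * ((1 - t) powr (-a) * (D powr a / D))"
    using D by (simp add: powr_minus field_simps)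
  also have "D powr a / D = D powr (a - 1)" using D by (simp add: powr_diff)
  finally show ?thesis unfolding hh_def D_def by simp
qed

lemma pointwise:
  fixes a x t :: real
  assumes "0 \<le> x" "x < 1" "0 < t" "t < 1"
  shows "omega_t t (of_real x) * ff a (phi_t t (of_real x)) = of_real ((1 - x) powr (-a) * hh a x t)"
proof -
  define D where "D = t + (1 - t) * (1 - x)"
  have D: "D > 0" unfolding D_def using assms by (smt (verit) mult_pos_pos)
  have e1: "(complex_of_real t - 1) * of_real x + 1 = of_real D" unfolding D_def by (simp add: algebra_simps)
  have om: "omega_t t (of_real x) = of_real (1 / D)" unfolding omega_t_def e1 by simp
  have r: "1 - t / D = (1 - t) * (1 - x) / D" using D unfolding D_def by (simp add: field_simps)
  have "1 - phi_t t (of_real x) = of_real (1 - t / D)"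
    unfolding phi_t_def e1 by simp
  then have "1 - phi_t t (of_real x) = of_real ((1 - t) * (1 - x) / D)" using r by simp
  then have ph: "ff a (phi_t t (of_real x)) = of_real (((1 - t) * (1 - x) / D) powr (-a))"
    unfolding ff_def using assms D by (simp add: powr_of_real[symmetric])
  show ?thesis unfolding om ph of_real_mult[symmetric] D_def using real_ident[OF assms] by simp
qed


lemma int_powr:
  assumes "0 < a" "a < 1"
  shows "(\<lambda>t::real. (1 - t) powr (-a)) integrable_on {0<..<1}"
proof -
  have "((\<lambda>t. t powr (1 - 1) * (1 - t) powr ((1 - a) - 1)) has_integral Beta 1 (1 - a)) {0<..<1}"
    using has_integral_Beta_real[of 1 "1 - a"] assms by (simp add: has_integral_Icc_iff_Ioo)
  then have "((\<lambda>t::real. (1 - t) powr (-a)) has_integral Beta 1 (1 - a)) {0<..<1}"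
    by (rule has_integral_cong[THEN iffD1, rotated]) auto
  then show ?thesis by blast
qed

lemma base_pos:
  fixes x t :: real
  assumes "0 \<le> x" "x < 1" "0 < t" "t < 1"
  shows "0 < t + (1 - t) * (1 - x)"
  using assms by (smt (verit) mult_nonneg_nonneg)

lemma hh_cont:
  assumes "0 \<le> x" "x < 1"
  shows "continuous_on {0<..<1} (hh a x)"
proof -
  have nz: "\<forall>t\<in>{0<..<1}. t + (1 - t) * (1 - x) \<noteq> 0" using base_pos[OF assms] by (metis greaterThanLessThan_iff less_irrefl)
  have "continuous_on {0<..<1} (\<lambda>t::real. (1 - t) powr (-a) * (t + (1 - t) * (1 - x)) powr (a - 1))"
    by (intro continuous_intros) (use nz in auto)
  then show ?thesis unfolding hh_def .
qed

lemma hh_nonneg: "0 \<le> hh a x t" unfolding hh_def by simp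

lemma hh_int:
  assumes "0 < a" "a < 1" "0 \<le> x" "x < 1"
  shows "hh a x integrable_on {0<..<1}"
proof (rule measurable_bounded_by_integrable_imp_integrable_real)
  show "hh a x \<in> borel_measurable (lebesgue_on {0<..<1})"
    by (rule continuous_imp_measurable_on_sets_lebesgue[OF hh_cont[OF assms(3,4)]]) (simp add: fmeasurableD lmeasurable_open)
  show "(\<lambda>t. (1 - x) powr (a - 1) * (1 - t) powr (-a)) integrable_on {0<..<1}"
    using int_powr[OF assms(1,2)] by (rule integrable_on_mult_right)
  show "{0<..<1::real} \<in> sets lebesgue" by (simp add: fmeasurableD lmeasurable_open)
  fix t :: real assume t: "t \<in> {0<..<1}"
  have "(t + (1 - t) * (1 - x)) powr (a - 1) \<le> (1 - x) powr (a - 1)"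
    using t assms by (intro powr_mono2') (auto simp: algebra_simps mult_le_cancel_left1 intro: mult_left_le_one_le)
  then show "\<bar>hh a x t\<bar> \<le> (1 - x) powr (a - 1) * (1 - t) powr (-a)"
    unfolding hh_def by (simp add: mult.commute mult_left_mono)
qed

lemma beta_refl:
  assumes "0 < a" "a < 1"
  shows "Beta a (1 - a) = pi / sin (pi * a)"
proof -
  have "complex_of_real (Gamma a * Gamma (1 - a)) = Gamma (of_real a) * Gamma (1 - of_real a)"
    using Gamma_complex_of_real[of "1 - a"] by (simp add: Gamma_complex_of_real)
  also have "\<dots> = of_real pi / sin (of_real pi * of_real a)" by (rule Gamma_reflection_complex)
  also have "\<dots> = of_real (pi / sin (pi * a))" by (metis of_real_mult sin_of_real of_real_divide)
  finally have "Gamma a * Gamma (1 - a) = pi / sin (pi * a)" using of_real_eq_iff by blast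
  then show ?thesis unfolding Beta_def by simp
qed

lemma beta_int:
  assumes "0 < a" "a < 1"
  shows "((\<lambda>t. t powr (a - 1) * (1 - t) powr (-a)) has_integral (pi / sin (pi * a))) {0<..<1}"
  using has_integral_Beta_real[of a "1 - a"] assms beta_refl[OF assms]
  by (simp add: has_integral_Icc_iff_Ioo)

lemma hilbert_ff:
  assumes "0 < a" "a < 1" "0 \<le> x" "x < 1"
  shows "hilbert_op (ff a) (of_real x) = of_real ((1 - x) powr (-a) * integral {0<..<1} (hh a x))"
proof -
  have "(hh a x has_integral integral {0<..<1} (hh a x)) {0<..<1}"
    using hh_int[OF assms] by blast
  then have "((\<lambda>t. (1 - x) powr (-a) * hh a x t) has_integral ((1 - x) powr (-a) * integral {0<..<1} (hh a x))) {0<..<1}"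
    by (rule has_integral_mult_right)
  then have "((\<lambda>t. complex_of_real ((1 - x) powr (-a) * hh a x t)) has_integral of_real ((1 - x) powr (-a) * integral {0<..<1} (hh a x))) {0<..<1}"
    by (rule has_integral_of_real)
  then have "((\<lambda>t. omega_t t (of_real x) * ff a (phi_t t (of_real x))) has_integral of_real ((1 - x) powr (-a) * integral {0<..<1} (hh a x))) {0<..<1}"
    by (rule has_integral_cong[THEN iffD1, rotated]) (use pointwise[OF assms(3,4)] in auto)
  then have "((\<lambda>t. omega_t t (of_real x) * ff a (phi_t t (of_real x))) has_integral of_real ((1 - x) powr (-a) * integral {0<..<1} (hh a x))) {0..1}"
    by (simp add: has_integral_Icc_iff_Ioo)
  then show ?thesis unfolding hilbert_op_def by (rule integral_unique)
qed

definition xs :: "nat \<Rightarrow> real" where "xs k = 1 - inverse (real (Suc k))"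

lemma xs_props: "0 \<le> xs k" "xs k < 1" "xs k \<le> xs (Suc k)"
  unfolding xs_def by (auto simp: field_simps)

lemma xs_lim: "xs \<longlonglongrightarrow> 1"
  unfolding xs_def using tendsto_diff[OF tendsto_const LIMSEQ_inverse_real_of_nat, of 1] by simp

lemma conv:
  assumes "0 < a" "a < 1"
  shows "(\<lambda>k. integral {0<..<1} (hh a (xs k))) \<longlonglongrightarrow> pi / sin (pi * a)"
proof -
  let ?g = "\<lambda>t::real. t powr (a - 1) * (1 - t) powr (-a)"
  have gi: "(?g has_integral (pi / sin (pi * a))) {0<..<1}" by (rule beta_int[OF assms])
  have le_g: "hh a (xs k) t \<le> ?g t" if t: "t \<in> {0<..<1}" for k t
  proof -
    have "(t + (1 - t) * (1 - xs k)) powr (a - 1) \<le> t powr (a - 1)"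
      using t assms xs_props[of k] by (intro powr_mono2') auto
    from mult_left_mono[OF this powr_ge_zero[of "1 - t" "-a"]]
    show ?thesis unfolding hh_def by (metis mult.commute)
  qed
  have mc: "?g integrable_on {0<..<1} \<and> (\<lambda>k. integral {0<..<1} (hh a (xs k))) \<longlonglongrightarrow> integral {0<..<1} ?g"
  proof (rule monotone_convergence_increasing)
    show "hh a (xs k) integrable_on {0<..<1}" for k using hh_int[OF assms xs_props(1,2)] .
    show "hh a (xs k) t \<le> hh a (xs (Suc k)) t" if t: "t \<in> {0<..<1}" for k t
    proof -
      have "(t + (1 - t) * (1 - xs k)) powr (a - 1) \<le> (t + (1 - t) * (1 - xs (Suc k))) powr (a - 1)"
      proof (rule powr_mono2')
        show "0 < t + (1 - t) * (1 - xs (Suc k))" using t xs_props[of "Suc k"] base_pos[of "xs (Suc k)" t] by auto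
        have "(1 - t) * (1 - xs (Suc k)) \<le> (1 - t) * (1 - xs k)"
          using t xs_props[of k] by (intro mult_left_mono) auto
        then show "t + (1 - t) * (1 - xs (Suc k)) \<le> t + (1 - t) * (1 - xs k)" by simp
      qed (use assms in auto)
      then show ?thesis unfolding hh_def by (simp add: mult_left_mono)
    qed
    show "(\<lambda>k. hh a (xs k) t) \<longlonglongrightarrow> ?g t" if t: "t \<in> {0<..<1}" for t
    proof -
      have "(\<lambda>k. t + (1 - t) * (1 - xs k)) \<longlonglongrightarrow> t + (1 - t) * (1 - 1)"
        by (intro tendsto_intros xs_lim)
      then have "(\<lambda>k. (t + (1 - t) * (1 - xs k)) powr (a - 1)) \<longlonglongrightarrow> t powr (a - 1)"
        using t by (intro tendsto_powr) auto
      from tendsto_mult_left[OF this, of "(1 - t) powr (-a)"]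
      show ?thesis unfolding hh_def by (subst mult.commute[of "t powr (a - 1)"])
    qed
    show "bounded (range (\<lambda>k. integral {0<..<1} (hh a (xs k))))"
    proof (rule boundedI)
      fix y assume "y \<in> range (\<lambda>k. integral {0<..<1} (hh a (xs k)))"
      then obtain k where y: "y = integral {0<..<1} (hh a (xs k))" by auto
      have "0 \<le> y" unfolding y by (intro integral_nonneg hh_int[OF assms xs_props(1,2)] hh_nonneg)
      moreover have "y \<le> pi / sin (pi * a)"
      proof -
        have gint: "?g integrable_on {0<..<1}" using gi by blast
        have "y \<le> integral {0<..<1} ?g"
          unfolding y by (rule integral_le[OF hh_int[OF assms xs_props(1,2)] gint le_g])
        also have "integral {0<..<1} ?g = pi / sin (pi * a)" by (rule integral_unique[OF gi])
        finally show ?thesis .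
      qed
      ultimately show "norm y \<le> pi / sin (pi * a)" by simp
    qed
  qed
  then show ?thesis using integral_unique[OF gi] by simp
qed


lemma ff_bound:
  assumes "0 < a" "a < 1" "z \<in> ball (0::complex) 1"
  shows "(1 - (cmod z)\<^sup>2) powr a * cmod (ff a z) \<le> 2 powr a"
proof -
  have z: "cmod z < 1" using assms by simp
  define r where "r = cmod (1 - z)"
  have r1: "1 - cmod z \<le> r" unfolding r_def by (metis norm_one norm_triangle_ineq2)
  have r0: "0 < r" using r1 z by linarith
  have nf: "cmod (ff a z) = r powr (-a)"
    unfolding ff_def r_def by (subst norm_powr_real_powr') auto
  have u0: "0 \<le> 1 - (cmod z)\<^sup>2" using z by (simp add: abs_square_le_1 less_imp_le power_le_one)
  have u: "1 - (cmod z)\<^sup>2 \<le> 2 * r"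
  proof -
    have "1 - (cmod z)\<^sup>2 = (1 - cmod z) * (1 + cmod z)" by (simp add: power2_eq_square algebra_simps)
    also have "\<dots> \<le> (1 - cmod z) * 2" using z by (intro mult_left_mono) auto
    also have "\<dots> \<le> r * 2" using r1 by simp
    finally show ?thesis by simp
  qed
  have "(1 - (cmod z)\<^sup>2) powr a * r powr (-a) \<le> (2 * r) powr a * r powr (-a)"
    using u u0 assms by (intro mult_right_mono powr_mono2) auto
  also have "\<dots> = 2 powr a * (r powr a * r powr (-a))" using r0 by (simp add: powr_mult)
  also have "r powr a * r powr (-a) = 1" using r0 by (simp add: powr_add[symmetric])
  finally show ?thesis unfolding nf by simp
qed

lemma ff_korenblum:
  assumes "0 < a" "a < 1"
  shows "korenblum a (ff a)" "korenblum_norm a (ff a) \<le> 2 powr a" "0 < korenblum_norm a (ff a)"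
proof -
  have hol: "ff a holomorphic_on ball 0 1"
    unfolding ff_def
  proof (intro holomorphic_intros)
    fix z :: complex assume "z \<in> ball 0 1"
    then have "Re z < 1" using complex_Re_le_cmod[of z] by simp
    then show "1 - z \<notin> \<real>\<^sub>\<le>\<^sub>0" by (simp add: complex_nonpos_Reals_iff)
  qed
  have bdd: "bdd_above ((\<lambda>z. (1 - (cmod z)\<^sup>2) powr a * cmod (ff a z)) ` ball (0::complex) 1)"
    using ff_bound[OF assms] by (intro bdd_aboveI2) auto
  show "korenblum a (ff a)" unfolding korenblum_def using hol bdd by blast
  show "korenblum_norm a (ff a) \<le> 2 powr a"
    unfolding korenblum_norm_def by (rule cSUP_least) (use ff_bound[OF assms] in auto)
  have "(1 - (cmod (0::complex))\<^sup>2) powr a * cmod (ff a 0) \<le> korenblum_norm a (ff a)"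
    unfolding korenblum_norm_def by (rule cSUP_upper[OF _ bdd]) simp
  then show "0 < korenblum_norm a (ff a)" by (simp add: ff_def)
qed


theorem mainTheorem1:
  fixes \<alpha> :: real
  assumes "0 < \<alpha>" and "\<alpha> < 1"
    and "\<And>f. korenblum \<alpha> f \<Longrightarrow> korenblum \<alpha> (hilbert_op f)"
  shows "ereal (pi / sin (pi * \<alpha>)) \<le> hilbert_opnorm \<alpha>"
proof -
  let ?a = \<alpha>
  let ?F = "ff ?a"
  define N where "N = korenblum_norm ?a ?F"
  define M where "M = korenblum_norm ?a (hilbert_op ?F)"
  define I where "I k = integral {0<..<1} (hh ?a (xs k))" for k
  define r where "r k = (1 + xs k) powr ?a * I k / 2 powr ?a" for k
  have kF: "korenblum ?a ?F" and N2: "N \<le> 2 powr ?a" and N0: "0 < N"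
    using ff_korenblum[OF assms(1,2)] unfolding N_def by auto
  have kH: "korenblum ?a (hilbert_op ?F)" using assms(3)[OF kF] .
  have bddH: "bdd_above ((\<lambda>z. (1 - (cmod z)\<^sup>2) powr ?a * cmod (hilbert_op ?F z)) ` ball (0::complex) 1)"
    using kH unfolding korenblum_def by (rule conjunct2)
  have I0: "0 \<le> I k" for k
    unfolding I_def by (intro integral_nonneg hh_int[OF assms(1,2) xs_props(1,2)] hh_nonneg)
  have rM: "r k \<le> M / N" for k
  proof -
    define x where "x = xs k"
    have x0: "0 \<le> x" and x1: "x < 1" unfolding x_def using xs_props by auto
    have "(1 - (cmod (complex_of_real x))\<^sup>2) powr ?a * cmod (hilbert_op ?F (of_real x)) \<le> M"
      unfolding M_def korenblum_norm_def by (rule cSUP_upper[OF _ bddH]) (use x0 x1 in simp)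
    moreover have "cmod (hilbert_op ?F (of_real x)) = (1 - x) powr (-?a) * I k"
    proof -
      have "hilbert_op ?F (of_real x) = of_real ((1 - x) powr (-?a) * I k)"
        using hilbert_ff[OF assms(1,2) x0 x1] unfolding I_def x_def by simp
      then show ?thesis using I0[of k] by (simp only: norm_of_real) (simp add: abs_mult)
    qed
    moreover have "(1 - x\<^sup>2) powr ?a * ((1 - x) powr (-?a) * I k) = (1 + x) powr ?a * I k"
    proof -
      have "1 - x\<^sup>2 = (1 - x) * (1 + x)" by (simp add: power2_eq_square algebra_simps)
      then have "(1 - x\<^sup>2) powr ?a = (1 - x) powr ?a * (1 + x) powr ?a" using x0 x1 by (simp add: powr_mult)
      moreover have "(1 - x) powr ?a * (1 - x) powr (-?a) = 1" using x1 by (simp add: powr_add[symmetric])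
      ultimately show ?thesis by (simp add: algebra_simps)
    qed
    ultimately have P: "(1 + x) powr ?a * I k \<le> M" using x0 by (simp add: abs_of_nonneg)
    have P0: "0 \<le> (1 + x) powr ?a * I k" using I0 by simp
    have "r k \<le> (1 + x) powr ?a * I k / N"
      unfolding r_def x_def[symmetric] using N0 N2 P0 by (intro divide_left_mono) auto
    also have "\<dots> \<le> M / N" using P N0 by (intro divide_right_mono) auto
    finally show ?thesis .
  qed
  have rS: "ereal (r k) \<le> hilbert_opnorm ?a" for k
  proof -
    have "ereal (M / N) \<le> hilbert_opnorm ?a"
      unfolding hilbert_opnorm_def M_def N_def
      by (rule SUP_upper2[where i = ?F]) (use kF N0 N_def in auto)
    then show ?thesis using rM[of k] by (meson ereal_less_eq(3) order_trans)
  qed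
  have "(\<lambda>k. (1 + xs k) powr ?a) \<longlonglongrightarrow> (1 + 1) powr ?a"
    by (intro tendsto_powr tendsto_intros xs_lim) auto
  then have "r \<longlonglongrightarrow> (1 + 1) powr ?a * (pi / sin (pi * ?a)) / 2 powr ?a"
    unfolding r_def I_def by (intro tendsto_intros conv[OF assms(1,2)]) (auto intro: xs_lim)
  then have "r \<longlonglongrightarrow> pi / sin (pi * ?a)" by simp
  then have "(\<lambda>k. ereal (r k)) \<longlonglongrightarrow> ereal (pi / sin (pi * ?a))" by (simp add: lim_ereal)
  then show ?thesis by (rule LIMSEQ_le_const2) (use rS in auto)
qed

end
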